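(* Let $G$ be a finite Abelian group, let $\hat G$ be its set of irreducible (one-dimensional) representations (characters) $\mu:G\to\mathbb{C}$, and let $g\mapsto U_g$ be a unitary representation of $G$ on a Hilbert space $\mathcal{H}$ having an orthonormal basis $\{|v_\mu\rangle\}_{\mu\in\hat G}$ with $U_g|v_\mu\rangle=\mu(g)|v_\mu\rangle$ for all $g\in G$, $\mu\in\hat G$. Let $|\psi\rangle=\sum_{\mu\in\hat G}a_\mu|v_\mu\rangle$ be a unit vector, and let $\mu_0\in\hat G$ satisfy $|a_{\mu_0}|\ge|a_\mu|$ for all $\mu\in\hat G$. Then conclusive single-state exclusion of the set $\{U_g|\psi\rangle: g\in G\}$ can be done, i.e., there exists a POVM $\{M_g\}_{g\in G}$ on $\mathcal{H}$ with $\langle\psi|U_g^\dagger M_gU_g|\psi\rangle=0$ for all $g\in G$, if and only if $$|a_{\mu_0}|\le\sum_{\mu\in\hat G,\ \mu\neq\mu_0}|a_\mu|.$$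
   Context: A POVM $\{M_g\}_{g\in G}$ on $\mathcal{H}$ is a family of positive semidefinite operators with $\sum_{g\in G}M_g=I_{\mathcal{H}}$. Conclusive single-state exclusion of $\{|u_g\rangle\}_{g\in G}$ means the existence of a POVM with $\operatorname{tr}[M_g|u_g\rangle\langle u_g|]=0$ for all $g$. *)

theory Defs
  imports "HOL-Algebra.Group" Complex_Main
begin

text \<open>Characters (one-dimensional irreducible unitary representations) of a group G,
  taken extensional outside the carrier so that the set of characters is finite.\<close>
definition characters :: "('g, 'b) monoid_scheme \<Rightarrow> ('g \<Rightarrow> complex) set" where
  "characters G = {\<mu>. (\<forall>x\<in>carrier G. cmod (\<mu> x) = 1)
                     \<and> (\<forall>x\<in>carrier G. \<forall>y\<in>carrier G. \<mu> (x \<otimes>\<^bsub>G\<^esub> y) = \<mu> x * \<mu> y)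
                     \<and> (\<forall>x. x \<notin> carrier G \<longrightarrow> \<mu> x = 0)}"

text \<open>The Hilbert space H is identified with complex functions on the index set I
  (coordinates w.r.t. the orthonormal basis v_mu); operators are I x I matrices.\<close>
definition qform :: "'i set \<Rightarrow> ('i \<Rightarrow> complex) \<Rightarrow> ('i \<Rightarrow> 'i \<Rightarrow> complex) \<Rightarrow> complex" where
  "qform I x M = (\<Sum>i\<in>I. \<Sum>j\<in>I. cnj (x i) * M i j * x j)"

definition psd :: "'i set \<Rightarrow> ('i \<Rightarrow> 'i \<Rightarrow> complex) \<Rightarrow> bool" where
  "psd I M \<longleftrightarrow> (\<forall>x. Im (qform I x M) = 0 \<and> Re (qform I x M) \<ge> 0)"

definition is_POVM :: "'i set \<Rightarrow> 'g set \<Rightarrow> ('g \<Rightarrow> 'i \<Rightarrow> 'i \<Rightarrow> complex) \<Rightarrow> bool" where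
  "is_POVM I A M \<longleftrightarrow> (\<forall>g\<in>A. psd I (M g))
      \<and> (\<forall>i\<in>I. \<forall>j\<in>I. (\<Sum>g\<in>A. M g i j) = (if i = j then 1 else 0))"

definition rep_act :: "'g \<Rightarrow> (('g \<Rightarrow> complex) \<Rightarrow> complex) \<Rightarrow> (('g \<Rightarrow> complex) \<Rightarrow> complex)" where
  "rep_act g a = (\<lambda>\<mu>. \<mu> g * a \<mu>)"

end

theory Submission
  imports Defs
begin


lemma qform_restrict:
  assumes "finite I" "S \<subseteq> I" "\<forall>k\<in>I - S. x k = 0"
  shows "qform I x M = qform S x M"
proof -
  have "(\<Sum>j\<in>I. cnj (x i) * M i j * x j) = (\<Sum>j\<in>S. cnj (x i) * M i j * x j)" for i
    by (rule sum.mono_neutral_right) (use assms in auto)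
  hence "qform I x M = (\<Sum>i\<in>I. \<Sum>j\<in>S. cnj (x i) * M i j * x j)" by (simp add: qform_def)
  also have "\<dots> = (\<Sum>i\<in>S. \<Sum>j\<in>S. cnj (x i) * M i j * x j)"
    by (rule sum.mono_neutral_right) (use assms in auto)
  finally show ?thesis by (simp add: qform_def)
qed

lemma qform_two:
  assumes "finite I" "i \<in> I" "j \<in> I" "i \<noteq> j"
  shows "qform I (\<lambda>k. if k = i then s else if k = j then t else 0) M
     = cnj s * M i i * s + cnj s * M i j * t + cnj t * M j i * s + cnj t * M j j * t"
proof -
  have "qform I (\<lambda>k. if k = i then s else if k = j then t else 0) M
      = qform {i,j} (\<lambda>k. if k = i then s else if k = j then t else 0) M"
    by (rule qform_restrict) (use assms in auto)
  also have "\<dots> = cnj s * M i i * s + cnj s * M i j * t + cnj t * M j i * s + cnj t * M j j * t"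
    using assms(4) by (simp add: qform_def algebra_simps)
  finally show ?thesis .
qed

lemma qform_one:
  assumes "finite I" "i \<in> I"
  shows "qform I (\<lambda>k. if k = i then s else 0) M = cnj s * M i i * s"
proof -
  have "qform I (\<lambda>k. if k = i then s else 0) M = qform {i} (\<lambda>k. if k = i then s else 0) M"
    by (rule qform_restrict) (use assms in auto)
  thus ?thesis by (simp add: qform_def)
qed

lemma psd_diag:
  assumes "psd I M" "finite I" "i \<in> I"
  shows "Im (M i i) = 0" "Re (M i i) \<ge> 0"
  using assms qform_one[OF assms(2,3), of 1 M] unfolding psd_def
  by (metis mult_1 mult_1_right complex_cnj_one)+

lemma psd_herm:
  assumes "psd I M" "finite I" "i \<in> I" "j \<in> I"
  shows "M j i = cnj (M i j)"
proof (cases "i = j")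
  case True
  then show ?thesis using psd_diag[OF assms(1,2,3)] by (simp add: complex_eq_iff)
next
  case False
  have d1: "Im (M i i) = 0" "Im (M j j) = 0" using psd_diag(1)[OF assms(1,2,3)] psd_diag(1)[OF assms(1,2,4)] by auto
  have "Im (qform I (\<lambda>k. if k = i then 1 else if k = j then 1 else 0) M) = 0"
    using assms(1) unfolding psd_def by blast
  hence e1: "Im (M i j + M j i) = 0"
    using qform_two[OF assms(2,3,4) False, of 1 1 M] d1 by simp
  have "Im (qform I (\<lambda>k. if k = i then 1 else if k = j then \<i> else 0) M) = 0"
    using assms(1) unfolding psd_def by blast
  hence e2: "Re (M i j - M j i) = 0"
    using qform_two[OF assms(2,3,4) False, of 1 \<i> M] d1 by (simp add: algebra_simps)
  show ?thesis using e1 e2 by (simp add: complex_eq_iff)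
qed

lemma psd_offdiag_le:
  assumes "psd I M" "finite I" "i \<in> I" "j \<in> I" "M i i = 1" "M j j = 1"
  shows "cmod (M i j) \<le> 1"
proof (cases "i = j \<or> M i j = 0")
  case True
  then show ?thesis using assms by auto
next
  case False
  define p where "p = M i j"
  define r where "r = cmod p"
  have r0: "r > 0" using False unfolding r_def p_def by auto
  have pp: "p * cnj p = complex_of_real (r^2)" unfolding r_def by (simp only: complex_norm_square)
  define t where "t = - cnj p / complex_of_real r"
  have h: "M j i = cnj p" using psd_herm[OF assms(1-4)] unfolding p_def by simp
  have rne: "complex_of_real r \<noteq> 0" using r0 by simp
  have ct0: "cnj t * t = (p * cnj p) / (complex_of_real r * complex_of_real r)"
    unfolding t_def by simp
  have ct: "cnj t * t = 1" unfolding ct0 pp using rne by (simp add: power2_eq_square)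
  have pt0: "p * t = - (p * cnj p) / complex_of_real r" unfolding t_def by simp
  have pt: "p * t = - complex_of_real r" unfolding pt0 pp using rne by (simp add: power2_eq_square)
  have cpt: "cnj t * cnj p = - complex_of_real r" using arg_cong[OF pt, of cnj] by (simp add: mult.commute)
  have "qform I (\<lambda>k. if k = i then 1 else if k = j then t else 0) M = 2 - 2 * complex_of_real r"
    using qform_two[OF assms(2,3,4), of 1 t M] False assms(5,6) h ct pt cpt
    unfolding p_def by simp
  moreover have "Re (qform I (\<lambda>k. if k = i then 1 else if k = j then t else 0) M) \<ge> 0"
    using assms(1) unfolding psd_def by blast
  ultimately show ?thesis unfolding r_def p_def by simp
qed

lemma qform_add_delta:
  assumes "finite I" "i \<in> I"
  shows "qform I (\<lambda>k. x k + (if k = i then t else 0)) N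
    = qform I x N + cnj t * (\<Sum>j\<in>I. N i j * x j) + t * (\<Sum>k\<in>I. cnj (x k) * N k i)
      + cnj t * t * N i i"
proof -
  have "qform I (\<lambda>k. x k + (if k = i then t else 0)) N
    = (\<Sum>k\<in>I. \<Sum>j\<in>I. cnj (x k) * N k j * x j + cnj (x k) * N k j * (if j = i then t else 0)
        + (if k = i then cnj t else 0) * N k j * x j
        + (if k = i then cnj t else 0) * N k j * (if j = i then t else 0))"
    unfolding qform_def by (intro sum.cong refl) (simp add: algebra_simps)
  also have "\<dots> = qform I x N + (\<Sum>k\<in>I. cnj (x k) * N k i * t)
      + (\<Sum>j\<in>I. cnj t * N i j * x j) + cnj t * N i i * t"
  proof -
    have r2: "cnj (x k) * N k j * (if j = i then t else 0) = (if j = i then cnj (x k) * N k i * t else 0)" for k j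
      by simp
    have r3: "(if k = i then cnj t else 0) * N k j * x j = (if k = i then cnj t * N i j * x j else 0)" for k j
      by simp
    have r4: "(if k = i then cnj t else 0) * N k j * (if j = i then t else 0)
       = (if k = i then (if j = i then cnj t * N i i * t else 0) else 0)" for k j
      by simp
    have r5: "(\<Sum>j\<in>I. if P then f j else 0) = (if P then (\<Sum>j\<in>I. f j) else 0)" for P and f :: "'a \<Rightarrow> complex"
      by simp
    show ?thesis unfolding qform_def r2 r3 r4 sum.distrib r5 using assms
      by (simp add: sum.delta)
  qed
  also have "(\<Sum>k\<in>I. cnj (x k) * N k i * t) = t * (\<Sum>k\<in>I. cnj (x k) * N k i)"
    by (simp add: sum_distrib_left mult_ac)
  also have "(\<Sum>j\<in>I. cnj t * N i j * x j) = cnj t * (\<Sum>j\<in>I. N i j * x j)"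
    by (simp add: sum_distrib_left mult_ac)
  finally show ?thesis
    by (simp add: mult_ac add_ac)
qed

lemma psd_null:
  assumes "psd I N" "finite I" "i \<in> I" "N i i = 1" "qform I x N = 0"
  shows "(\<Sum>j\<in>I. N i j * x j) = 0"
proof -
  define \<alpha> where "\<alpha> = (\<Sum>j\<in>I. N i j * x j)"
  have b: "(\<Sum>k\<in>I. cnj (x k) * N k i) = cnj \<alpha>"
    unfolding \<alpha>_def using psd_herm[OF assms(1,2,3)] by (simp add: mult.commute)
  have "qform I (\<lambda>k. x k + (if k = i then - \<alpha> else 0)) N = - (cnj \<alpha> * \<alpha>)"
    using qform_add_delta[OF assms(2,3), of x "- \<alpha>" N] assms(4,5) b unfolding \<alpha>_def[symmetric]
    by (simp add: algebra_simps)
  moreover have "Re (qform I (\<lambda>k. x k + (if k = i then - \<alpha> else 0)) N) \<ge> 0"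
    using assms(1) unfolding psd_def by blast
  ultimately have "Re (cnj \<alpha> * \<alpha>) \<le> 0" by simp
  hence "cmod \<alpha> ^ 2 \<le> 0" using complex_norm_square[of \<alpha>]
    by (metis Re_complex_of_real mult.commute)
  thus ?thesis unfolding \<alpha>_def by simp
qed



lemma char_props:
  assumes "\<mu> \<in> characters G"
  shows "\<And>x. x \<in> carrier G \<Longrightarrow> cmod (\<mu> x) = 1"
    "\<And>x y. x \<in> carrier G \<Longrightarrow> y \<in> carrier G \<Longrightarrow> \<mu> (x \<otimes>\<^bsub>G\<^esub> y) = \<mu> x * \<mu> y"
    "\<And>x. x \<notin> carrier G \<Longrightarrow> \<mu> x = 0"
  using assms unfolding characters_def by auto

lemma cnj_mult_norm1: "cmod z = 1 \<Longrightarrow> z * cnj z = 1"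
  using complex_norm_square[of z] by simp

lemma cnj_mult_norm1': "cmod z = 1 \<Longrightarrow> cnj z * z = 1"
  using cnj_mult_norm1[of z] by (simp add: mult.commute)

lemma char_orth:
  assumes "group G" "finite (carrier G)" "\<mu> \<in> characters G" "\<nu> \<in> characters G"
  shows "(\<Sum>g\<in>carrier G. \<mu> g * cnj (\<nu> g)) = (if \<mu> = \<nu> then of_nat (card (carrier G)) else 0)"
proof (cases "\<mu> = \<nu>")
  case True
  have "(\<Sum>g\<in>carrier G. \<mu> g * cnj (\<nu> g)) = (\<Sum>g\<in>carrier G. 1)"
    using True char_props(1)[OF assms(3)] cnj_mult_norm1 by (intro sum.cong) auto
  then show ?thesis using True by simp
next
  case False
  then obtain h where hne: "\<mu> h \<noteq> \<nu> h" by auto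
  have hG: "h \<in> carrier G" using hne char_props(3)[OF assms(3)] char_props(3)[OF assms(4)] by metis
  interpret group G by fact
  define \<chi> where "\<chi> g = \<mu> g * cnj (\<nu> g)" for g
  have \<chi>m: "\<chi> (h \<otimes>\<^bsub>G\<^esub> g) = \<chi> h * \<chi> g" if "g \<in> carrier G" for g
    unfolding \<chi>_def using char_props(2)[OF assms(3) hG that] char_props(2)[OF assms(4) hG that]
    by (simp add: mult_ac)
  have \<chi>h: "\<chi> h \<noteq> 1"
  proof
    assume "\<chi> h = 1"
    hence "\<mu> h * cnj (\<nu> h) * \<nu> h = \<nu> h" unfolding \<chi>_def by simp
    hence "\<mu> h = \<nu> h" using cnj_mult_norm1'[OF char_props(1)[OF assms(4) hG]] by (simp add: mult.assoc)
    thus False using hne by simp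
  qed
  have bij: "bij_betw (\<lambda>g. h \<otimes>\<^bsub>G\<^esub> g) (carrier G) (carrier G)"
    by (rule bij_betw_byWitness[where f' = "\<lambda>g. inv\<^bsub>G\<^esub> h \<otimes>\<^bsub>G\<^esub> g"])
       (auto simp: hG m_assoc[symmetric])
  have "(\<Sum>g\<in>carrier G. \<chi> g) = (\<Sum>g\<in>carrier G. \<chi> (h \<otimes>\<^bsub>G\<^esub> g))"
    using sum.reindex_bij_betw[OF bij, of \<chi>] by simp
  also have "\<dots> = \<chi> h * (\<Sum>g\<in>carrier G. \<chi> g)"
    by (simp add: \<chi>m sum_distrib_left)
  finally have "(1 - \<chi> h) * (\<Sum>g\<in>carrier G. \<chi> g) = 0" by (simp add: algebra_simps)
  hence "(\<Sum>g\<in>carrier G. \<chi> g) = 0" using \<chi>h by simp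
  then show ?thesis using False unfolding \<chi>_def by simp
qed

lemma sign_split:
  assumes "finite J" "\<forall>j\<in>J. 0 \<le> r j \<and> r j \<le> b" "(0::real) \<le> b"
  shows "\<exists>A\<subseteq>J. \<bar>sum r A - sum r (J - A)\<bar> \<le> b"
  using assms
proof (induction J rule: finite_induct)
  case empty
  then show ?case by auto
next
  case (insert x F)
  then obtain A where A: "A \<subseteq> F" "\<bar>sum r A - sum r (F - A)\<bar> \<le> b" by auto
  have fA: "finite A" "finite (F - A)" using A(1) insert(1) finite_subset by auto
  have rx: "0 \<le> r x" "r x \<le> b" using insert(4) by auto
  show ?case
  proof (cases "sum r A - sum r (F - A) \<ge> 0")
    case True
    have e: "insert x F - A = insert x (F - A)" using A(1) insert(2) by auto
    have "sum r (insert x F - A) = r x + sum r (F - A)"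
      unfolding e using fA insert(2) by simp
    thus ?thesis using A True rx by (intro exI[of _ A]) auto
  next
    case False
    have e: "insert x F - insert x A = F - A" using A(1) insert(2) by auto
    have "x \<notin> A" using A(1) insert(2) by auto
    hence "sum r (insert x A) = r x + sum r A" using fA by simp
    thus ?thesis using A False rx e by (intro exI[of _ "insert x A"]) auto
  qed
qed

lemma triangle:
  fixes P Q r :: real
  assumes "0 \<le> P" "0 \<le> Q" "0 \<le> r" "\<bar>P - Q\<bar> \<le> r" "r \<le> P + Q"
  shows "\<exists>z. cmod z = 1 \<and> cmod (complex_of_real P + z * complex_of_real Q) = r"
proof (cases "P * Q = 0")
  case True
  hence "r = P + Q" using assms by auto
  thus ?thesis using assms by (intro exI[of _ 1]) (simp flip: of_real_add)
next
  case False
  hence pq: "P * Q > 0" using assms by (simp add: less_le)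
  define c where "c = (r^2 - P^2 - Q^2) / (2 * P * Q)"
  have "r^2 \<le> (P + Q)^2" using assms by (intro power_mono) auto
  hence c1: "c \<le> 1" unfolding c_def using pq by (simp add: divide_simps power2_eq_square algebra_simps)
  have "(P - Q)^2 \<le> r^2" using assms by (metis abs_ge_zero power2_abs power_mono)
  hence c2: "-1 \<le> c" unfolding c_def using pq by (simp add: divide_simps power2_eq_square algebra_simps)
  have cc: "c^2 \<le> 1" using c1 c2 by (simp add: abs_square_le_1)
  define s where "s = sqrt (1 - c^2)"
  have s2: "s^2 = 1 - c^2" unfolding s_def using cc by simp
  define z where "z = Complex c s"
  have z1: "cmod z = 1" unfolding z_def cmod_def using s2 by simp
  have pq0: "P \<noteq> 0" "Q \<noteq> 0" using pq by auto
  have cpq: "2 * c * (P * Q) = r^2 - P^2 - Q^2" unfolding c_def using pq0 by simp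
  have "(cmod (complex_of_real P + z * complex_of_real Q))^2 = r^2"
  proof -
    have "(cmod (complex_of_real P + z * complex_of_real Q))^2 = (P + c * Q)^2 + (s * Q)^2"
      unfolding z_def cmod_def by (simp add: power2_eq_square)
    also have "\<dots> = P^2 + 2 * c * (P * Q) + Q^2 * (c^2 + s^2)" by (simp add: power2_eq_square algebra_simps)
    also have "\<dots> = P^2 + Q^2 + 2 * c * (P * Q)" using s2 by simp
    finally show ?thesis using cpq by simp
  qed
  hence "cmod (complex_of_real P + z * complex_of_real Q) = r"
    using assms(3) by (simp add: power2_eq_iff_nonneg)
  thus ?thesis using z1 by blast
qed

lemma polygon:
  assumes "finite I" "i0 \<in> I" "\<forall>i\<in>I. 0 \<le> r i \<and> r i \<le> r i0" "r i0 \<le> (\<Sum>i\<in>I-{i0}. r i)"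
  shows "\<exists>c. (\<forall>i\<in>I. cmod (c i) = 1) \<and> (\<Sum>i\<in>I. c i * complex_of_real (r i)) = 0"
proof (cases "r i0 = 0")
  case True
  hence "\<forall>i\<in>I. r i = 0" using assms(3) by force
  thus ?thesis by (intro exI[of _ "\<lambda>_. 1"]) simp
next
  case False
  hence r0: "r i0 > 0" using assms(2,3) by force
  define J where "J = I - {i0}"
  have fJ: "finite J" using assms(1) J_def by simp
  obtain A where A: "A \<subseteq> J" "\<bar>sum r A - sum r (J - A)\<bar> \<le> r i0"
    using sign_split[OF fJ, of r "r i0"] assms(3) r0 unfolding J_def by auto
  define P where "P = sum r A"
  define Q where "Q = sum r (J - A)"
  have PQ: "P + Q = sum r J" unfolding P_def Q_def using sum.subset_diff[OF A(1) fJ, of r] by simp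
  have P0: "0 \<le> P" "0 \<le> Q" unfolding P_def Q_def using A(1) assms(3) J_def
    by (auto intro!: sum_nonneg)
  obtain z where z: "cmod z = 1" "cmod (complex_of_real P + z * complex_of_real Q) = r i0"
    using triangle[of P Q "r i0"] P0 A(2) PQ assms(4) r0 unfolding P_def Q_def J_def by auto
  define w where "w = - (complex_of_real P + z * complex_of_real Q) / complex_of_real (r i0)"
  have w1: "cmod w = 1" unfolding w_def using z(2) r0 by (simp only: norm_divide norm_minus_cancel norm_of_real) simp
  have wr: "w * complex_of_real (r i0) = - (complex_of_real P + z * complex_of_real Q)"
    unfolding w_def using r0 by simp
  define c where "c i = (if i = i0 then w else if i \<in> A then 1 else z)" for i
  have "(\<Sum>i\<in>I. c i * complex_of_real (r i)) = c i0 * complex_of_real (r i0) + (\<Sum>i\<in>J. c i * complex_of_real (r i))"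
    unfolding J_def using assms(1,2) by (simp add: sum.remove)
  also have "(\<Sum>i\<in>J. c i * complex_of_real (r i)) = (\<Sum>i\<in>J-A. c i * complex_of_real (r i)) + (\<Sum>i\<in>A. c i * complex_of_real (r i))"
    using sum.subset_diff[OF A(1) fJ] .
  also have "(\<Sum>i\<in>A. c i * complex_of_real (r i)) = (\<Sum>i\<in>A. complex_of_real (r i))"
    by (rule sum.cong) (use A(1) in \<open>auto simp: c_def J_def\<close>)
  also have "\<dots> = complex_of_real P" by (simp add: P_def)
  also have "(\<Sum>i\<in>J-A. c i * complex_of_real (r i)) = (\<Sum>i\<in>J-A. z * complex_of_real (r i))"
    by (rule sum.cong) (auto simp: c_def J_def)
  also have "\<dots> = z * complex_of_real Q" by (simp add: Q_def sum_distrib_left)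
  also have "c i0 = w" by (simp add: c_def)
  finally have "(\<Sum>i\<in>I. c i * complex_of_real (r i)) = 0" using wr by simp
  moreover have "\<forall>i\<in>I. cmod (c i) = 1" using w1 z(1) by (simp add: c_def)
  ultimately show ?thesis by blast
qed



lemma qform_rep_act:
  "qform I (rep_act g x) K = qform I x (\<lambda>i j. cnj (i g) * K i j * j g)"
  unfolding qform_def rep_act_def by (intro sum.cong refl) (simp add: mult_ac)

lemma qform_sum:
  "(\<Sum>g\<in>S. qform I x (K g)) = qform I x (\<lambda>i j. \<Sum>g\<in>S. K g i j)"
proof -
  have "(\<Sum>g\<in>S. qform I x (K g)) = (\<Sum>i\<in>I. \<Sum>g\<in>S. \<Sum>j\<in>I. cnj (x i) * K g i j * x j)"
    unfolding qform_def by (rule sum.swap)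
  also have "\<dots> = (\<Sum>i\<in>I. \<Sum>j\<in>I. \<Sum>g\<in>S. cnj (x i) * K g i j * x j)"
    by (intro sum.cong refl) (rule sum.swap)
  also have "\<dots> = qform I x (\<lambda>i j. \<Sum>g\<in>S. K g i j)"
    unfolding qform_def by (simp add: sum_distrib_left sum_distrib_right)
  finally show ?thesis .
qed

lemma qform_scale:
  "qform I x (\<lambda>i j. s * K i j) = s * qform I x K"
  unfolding qform_def by (simp add: sum_distrib_left mult_ac)

lemma qform_rank1:
  "qform I x (\<lambda>i j. w i * cnj (w j)) = complex_of_real ((cmod (\<Sum>i\<in>I. cnj (x i) * w i))^2)"
proof -
  have "qform I x (\<lambda>i j. w i * cnj (w j)) = (\<Sum>i\<in>I. cnj (x i) * w i) * cnj (\<Sum>i\<in>I. cnj (x i) * w i)"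
    unfolding qform_def cnj_sum sum_product by (intro sum.cong refl) (simp add: mult_ac)
  thus ?thesis by (simp only: complex_norm_square)
qed



theorem proposition1:
  fixes G :: "('g, 'b) monoid_scheme"
    and a :: "('g \<Rightarrow> complex) \<Rightarrow> complex"
    and \<mu>0 :: "'g \<Rightarrow> complex"
  assumes "comm_group G"
    and "finite (carrier G)"
    and "(\<Sum>\<mu>\<in>characters G. (cmod (a \<mu>))\<^sup>2) = 1"
    and "\<mu>0 \<in> characters G"
    and "\<forall>\<mu>\<in>characters G. cmod (a \<mu>0) \<ge> cmod (a \<mu>)"
  shows "(\<exists>M. is_POVM (characters G) (carrier G) M
              \<and> (\<forall>g\<in>carrier G. qform (characters G) (rep_act g a) (M g) = 0))
         \<longleftrightarrow> cmod (a \<mu>0) \<le> (\<Sum>\<mu>\<in>characters G - {\<mu>0}. cmod (a \<mu>))"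
proof -
  define I where "I = characters G"
  have finI: "finite I"
  proof (rule ccontr)
    assume "infinite I" thus False using assms(3) unfolding I_def by simp
  qed
  have grp: "group G" using assms(1) unfolding comm_group_def by blast
  have i0: "\<mu>0 \<in> I" using assms(4) I_def by simp
  show ?thesis unfolding I_def[symmetric]
  proof
    assume "\<exists>M. is_POVM I (carrier G) M \<and> (\<forall>g\<in>carrier G. qform I (rep_act g a) (M g) = 0)"
    then obtain M where M: "is_POVM I (carrier G) M" "\<forall>g\<in>carrier G. qform I (rep_act g a) (M g) = 0"
      by blast
    define N where "N i j = (\<Sum>g\<in>carrier G. cnj (i g) * M g i j * j g)" for i j
    have qN: "qform I x N = (\<Sum>g\<in>carrier G. qform I (rep_act g x) (M g))" for x
      unfolding qform_rep_act qform_sum N_def ..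
    have psdN: "psd I N" unfolding psd_def
    proof
      fix x
      have "\<forall>g\<in>carrier G. Im (qform I (rep_act g x) (M g)) = 0 \<and> Re (qform I (rep_act g x) (M g)) \<ge> 0"
        using M(1) unfolding is_POVM_def psd_def by blast
      thus "Im (qform I x N) = 0 \<and> Re (qform I x N) \<ge> 0"
        unfolding qN by (simp add: sum_nonneg)
    qed
    have Ndiag: "N i i = 1" if "i \<in> I" for i
    proof -
      have "N i i = (\<Sum>g\<in>carrier G. M g i i)"
        unfolding N_def
      proof (rule sum.cong[OF refl])
        fix g assume "g \<in> carrier G"
        hence "cnj (i g) * i g = 1" using char_props(1)[of i G g] that I_def cnj_mult_norm1' by auto
        thus "cnj (i g) * M g i i * i g = M g i i" by (simp add: mult_ac)
      qed
      also have "\<dots> = 1" using M(1) that unfolding is_POVM_def by simp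
      finally show ?thesis .
    qed
    have "qform I a N = 0" unfolding qN using M(2) by simp
    hence null: "(\<Sum>j\<in>I. N \<mu>0 j * a j) = 0" using psd_null[of I N \<mu>0 a] psdN finI i0 Ndiag[OF i0] by blast
    have "(\<Sum>j\<in>I. N \<mu>0 j * a j) = N \<mu>0 \<mu>0 * a \<mu>0 + (\<Sum>j\<in>I - {\<mu>0}. N \<mu>0 j * a j)"
      using finI i0 by (simp add: sum.remove)
    hence "a \<mu>0 = - (\<Sum>j\<in>I - {\<mu>0}. N \<mu>0 j * a j)" using null Ndiag[OF i0]
      by (simp add: add_eq_0_iff)
    hence "cmod (a \<mu>0) = cmod (\<Sum>j\<in>I - {\<mu>0}. N \<mu>0 j * a j)" by simp
    also have "\<dots> \<le> (\<Sum>j\<in>I - {\<mu>0}. cmod (N \<mu>0 j * a j))" by (rule norm_sum)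
    also have "\<dots> \<le> (\<Sum>j\<in>I - {\<mu>0}. cmod (a j))"
    proof (rule sum_mono)
      fix j assume j: "j \<in> I - {\<mu>0}"
      have "cmod (N \<mu>0 j) \<le> 1"
        using psd_offdiag_le[OF psdN finI i0, of j] j Ndiag i0 by auto
      thus "cmod (N \<mu>0 j * a j) \<le> cmod (a j)"
        by (simp add: norm_mult mult_left_le_one_le)
    qed
    finally show "cmod (a \<mu>0) \<le> (\<Sum>\<mu>\<in>I - {\<mu>0}. cmod (a \<mu>))" .
  next
    assume ineq: "cmod (a \<mu>0) \<le> (\<Sum>\<mu>\<in>I - {\<mu>0}. cmod (a \<mu>))"
    obtain c where c: "\<forall>i\<in>I. cmod (c i) = 1" "(\<Sum>i\<in>I. c i * complex_of_real (cmod (a i))) = 0"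
      using polygon[OF finI i0, of "\<lambda>i. cmod (a i)"] ineq assms(5) I_def by auto
    define \<phi> where "\<phi> i = c i * (if a i = 0 then 1 else a i / complex_of_real (cmod (a i)))" for i
    have \<phi>1: "cmod (\<phi> i) = 1" if "i \<in> I" for i
      using c(1) that unfolding \<phi>_def by (simp add: norm_mult norm_divide)
    have \<phi>a: "cnj (a i) * \<phi> i = c i * complex_of_real (cmod (a i))" for i
    proof (cases "a i = 0")
      case True thus ?thesis by (simp add: \<phi>_def)
    next
      case False
      have "cnj (a i) * a i = complex_of_real (cmod (a i)) * complex_of_real (cmod (a i))"
        using complex_norm_square[of "a i"] by (simp add: power2_eq_square mult.commute)
      thus ?thesis using False unfolding \<phi>_def by (simp add: field_simps)
    qed
    define n where "n = card (carrier G)"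
    have n0: "n > 0" unfolding n_def using assms(2) group.subgroup_self[OF grp]
      by (metis card_gt_0_iff empty_iff monoid.one_closed group.is_monoid grp)
    define M where "M g i j = complex_of_real (1 / real n) * ((i g * \<phi> i) * cnj (j g * \<phi> j))"
      for g :: 'g and i j :: "'g \<Rightarrow> complex"
    have qM: "qform I x (M g) = complex_of_real (1 / real n) *
        complex_of_real ((cmod (\<Sum>i\<in>I. cnj (x i) * (i g * \<phi> i)))^2)" for g x
      unfolding M_def qform_scale qform_rank1 ..
    have psdM: "psd I (M g)" for g
      unfolding psd_def qM by simp
    have sumM: "(\<Sum>g\<in>carrier G. M g i j) = (if i = j then 1 else 0)" if "i \<in> I" "j \<in> I" for i j
    proof -
      have "(\<Sum>g\<in>carrier G. M g i j) = complex_of_real (1 / real n) * (\<phi> i * cnj (\<phi> j)) *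
           (\<Sum>g\<in>carrier G. i g * cnj (j g))"
        unfolding M_def by (simp add: sum_distrib_left mult_ac)
      also have "\<dots> = (if i = j then 1 else 0)"
        using char_orth[OF grp assms(2), of i j] that I_def n0 cnj_mult_norm1[OF \<phi>1[OF that(1)]]
        by (cases "i = j") (simp_all add: n_def)
      finally show ?thesis .
    qed
    have zero: "qform I (rep_act g a) (M g) = 0" if "g \<in> carrier G" for g
    proof -
      have "(\<Sum>i\<in>I. cnj (rep_act g a i) * (i g * \<phi> i)) = (\<Sum>i\<in>I. c i * complex_of_real (cmod (a i)))"
      proof (rule sum.cong[OF refl])
        fix i assume "i \<in> I"
        hence "cnj (i g) * i g = 1" using char_props(1)[of i G g] that I_def cnj_mult_norm1' by auto
        thus "cnj (rep_act g a i) * (i g * \<phi> i) = c i * complex_of_real (cmod (a i))"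
          unfolding rep_act_def using \<phi>a[of i] by (simp add: mult_ac)
      qed
      thus ?thesis unfolding qM using c(2) by simp
    qed
    show "\<exists>M. is_POVM I (carrier G) M \<and> (\<forall>g\<in>carrier G. qform I (rep_act g a) (M g) = 0)"
      using psdM sumM zero unfolding is_POVM_def by blast
  qed
qed

end
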